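(* Let $(Y,\preceq,\prec,\to)$ be a solid vector space. Then the collection of all open intervals $(a,b)=\{x\in Y: a\prec x\prec b\}$, where $a,b\in Y$ with $a\prec b$, is a basis for a Hausdorff topology on $Y$.
   Context: Vector space with convergence: a real vector space $Y$ with a relation $\to$ between sequences in $Y$ and points of $Y$ (uniqueness of limits not assumed) such that (C1) $x_n\to x$, $y_n\to y$ imply $x_n+y_n\to x+y$; (C2) $x_n\to x$, $\lambda\in\mathbb R$ imply $\lambda x_n\to\lambda x$; (C3) $\lambda_n\to\lambda$ in $\mathbb R$ imply $\lambda_n x\to\lambda x$. $A\subseteq Y$ is open if $x_n\to x\in A$ implies $x_n\in A$ for all but finitely many $n$; closed if $x_n\to x$, $x_n\in A$ $\forall n$ imply $x\in A$; $A^\circ$ is the union of all open subsets of $A$. A cone is a nonempty closed $K$ with $\lambda K\subseteq K$ ($\lambda\ge0$), $K+K\subseteq K$, $K\cap(-K)=\{0\}$; solid if $K\neq\{0\}$ and $K^\circ\neq\emptyset$. A vector ordering is a partial order $\preceq$ with (V1) $x\preceq y\Rightarrow x+z\preceq y+z$; (V2) $\lambda\ge0$, $x\preceq y\Rightarrow\lambda x\preceq\lambda y$; (V3) $x_n\to x$, $y_n\to y$, $x_n\preceq y_n$ $\forall n\Rightarrow x\preceq y$. A solid vector space $(Y,\preceq,\prec,\to)$ is such an ordered vector space whose positive cone $K=\{x:x\succeq0\}$ is solid, with $x\prec y$ iff $y-x\in K^\circ$. *)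

theory Defs
  imports "HOL-Analysis.Analysis"
begin

definition conv_space :: "((nat \<Rightarrow> 'a::real_vector) \<Rightarrow> 'a \<Rightarrow> bool) \<Rightarrow> bool" where
  "conv_space conv \<longleftrightarrow>
     (\<forall>xs x ys y. conv xs x \<and> conv ys y \<longrightarrow> conv (\<lambda>n. xs n + ys n) (x + y)) \<and>
     (\<forall>xs x (c::real). conv xs x \<longrightarrow> conv (\<lambda>n. c *\<^sub>R xs n) (c *\<^sub>R x)) \<and>
     (\<forall>(cs::nat \<Rightarrow> real) c x. cs \<longlonglongrightarrow> c \<longrightarrow> conv (\<lambda>n. cs n *\<^sub>R x) (c *\<^sub>R x))"

definition c_open :: "((nat \<Rightarrow> 'a) \<Rightarrow> 'a \<Rightarrow> bool) \<Rightarrow> 'a set \<Rightarrow> bool" where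
  "c_open conv A \<longleftrightarrow>
     (\<forall>xs x. conv xs x \<and> x \<in> A \<longrightarrow> (\<forall>\<^sub>F n in sequentially. xs n \<in> A))"

definition c_closed :: "((nat \<Rightarrow> 'a) \<Rightarrow> 'a \<Rightarrow> bool) \<Rightarrow> 'a set \<Rightarrow> bool" where
  "c_closed conv A \<longleftrightarrow> (\<forall>xs x. conv xs x \<and> (\<forall>n. xs n \<in> A) \<longrightarrow> x \<in> A)"

definition c_interior :: "((nat \<Rightarrow> 'a) \<Rightarrow> 'a \<Rightarrow> bool) \<Rightarrow> 'a set \<Rightarrow> 'a set" where
  "c_interior conv A = \<Union>{U. U \<subseteq> A \<and> c_open conv U}"

definition c_cone :: "((nat \<Rightarrow> 'a::real_vector) \<Rightarrow> 'a \<Rightarrow> bool) \<Rightarrow> 'a set \<Rightarrow> bool" where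
  "c_cone conv K \<longleftrightarrow> K \<noteq> {} \<and> c_closed conv K \<and>
     (\<forall>(c::real) x. c \<ge> 0 \<and> x \<in> K \<longrightarrow> c *\<^sub>R x \<in> K) \<and>
     (\<forall>x y. x \<in> K \<and> y \<in> K \<longrightarrow> x + y \<in> K) \<and>
     K \<inter> uminus ` K = {0}"

definition solid_cone :: "((nat \<Rightarrow> 'a::real_vector) \<Rightarrow> 'a \<Rightarrow> bool) \<Rightarrow> 'a set \<Rightarrow> bool" where
  "solid_cone conv K \<longleftrightarrow> c_cone conv K \<and> K \<noteq> {0} \<and> c_interior conv K \<noteq> {}"

definition vector_ordering ::
  "((nat \<Rightarrow> 'a::real_vector) \<Rightarrow> 'a \<Rightarrow> bool) \<Rightarrow> ('a \<Rightarrow> 'a \<Rightarrow> bool) \<Rightarrow> bool" where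
  "vector_ordering conv le \<longleftrightarrow>
     (\<forall>x. le x x) \<and> (\<forall>x y. le x y \<and> le y x \<longrightarrow> x = y) \<and>
     (\<forall>x y z. le x y \<and> le y z \<longrightarrow> le x z) \<and>
     (\<forall>x y z. le x y \<longrightarrow> le (x + z) (y + z)) \<and>
     (\<forall>(c::real) x y. c \<ge> 0 \<and> le x y \<longrightarrow> le (c *\<^sub>R x) (c *\<^sub>R y)) \<and>
     (\<forall>xs x ys y. conv xs x \<and> conv ys y \<and> (\<forall>n. le (xs n) (ys n)) \<longrightarrow> le x y)"

definition solid_vector_space ::
  "((nat \<Rightarrow> 'a::real_vector) \<Rightarrow> 'a \<Rightarrow> bool) \<Rightarrow> ('a \<Rightarrow> 'a \<Rightarrow> bool) \<Rightarrow> ('a \<Rightarrow> 'a \<Rightarrow> bool) \<Rightarrow> bool" where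
  "solid_vector_space conv le lt \<longleftrightarrow>
     conv_space conv \<and> vector_ordering conv le \<and>
     solid_cone conv {x. le 0 x} \<and>
     (\<forall>x y. lt x y \<longleftrightarrow> y - x \<in> c_interior conv {x. le 0 x})"

definition open_interval :: "('a \<Rightarrow> 'a \<Rightarrow> bool) \<Rightarrow> 'a \<Rightarrow> 'a \<Rightarrow> 'a set" where
  "open_interval lt a b = {x. lt a x \<and> lt x b}"

end

theory Submission
  imports Defs
begin

locale svs =
  fixes conv :: "(nat \<Rightarrow> 'a::real_vector) \<Rightarrow> 'a \<Rightarrow> bool"
    and le lt :: "'a \<Rightarrow> 'a \<Rightarrow> bool"
  assumes svs: "solid_vector_space conv le lt"
begin

definition "K = {x. le 0 x}"
definition "P = c_interior conv K"

lemma C1: "conv xs x \<Longrightarrow> conv ys y \<Longrightarrow> conv (\<lambda>n. xs n + ys n) (x + y)"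
  using svs unfolding solid_vector_space_def conv_space_def by blast
lemma C2: "conv xs x \<Longrightarrow> conv (\<lambda>n. c *\<^sub>R xs n) (c *\<^sub>R x)"
  using svs unfolding solid_vector_space_def conv_space_def by blast
lemma C3: "cs \<longlonglongrightarrow> c \<Longrightarrow> conv (\<lambda>n. cs n *\<^sub>R x) (c *\<^sub>R x)"
  using svs unfolding solid_vector_space_def conv_space_def by blast
lemma VO: "vector_ordering conv le"
  using svs unfolding solid_vector_space_def by blast
lemma lt_iff: "lt x y \<longleftrightarrow> y - x \<in> P"
  using svs unfolding solid_vector_space_def P_def K_def by blast
lemma cone: "c_cone conv K"
  using svs unfolding solid_vector_space_def solid_cone_def P_def K_def by blast
lemma Pne: "P \<noteq> {}"
  using svs unfolding solid_vector_space_def solid_cone_def P_def K_def by blast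

lemma const: "conv (\<lambda>n. x) x"
  using C3[of "\<lambda>n. 1" 1 x] by simp

lemma Popen: "c_open conv P"
  unfolding c_open_def
proof (intro allI impI)
  fix xs x assume "conv xs x \<and> x \<in> P"
  then obtain U where "conv xs x" "x \<in> U" "U \<subseteq> K" "c_open conv U"
    unfolding P_def c_interior_def by blast
  then have "\<forall>\<^sub>F n in sequentially. xs n \<in> U" unfolding c_open_def by blast
  moreover have "U \<subseteq> P" unfolding P_def c_interior_def using \<open>U \<subseteq> K\<close> \<open>c_open conv U\<close> by blast
  ultimately show "\<forall>\<^sub>F n in sequentially. xs n \<in> P"
    by (auto elim: eventually_mono)
qed

lemma PK: "P \<subseteq> K" unfolding P_def c_interior_def by blast
lemma int_max: "U \<subseteq> K \<Longrightarrow> c_open conv U \<Longrightarrow> U \<subseteq> P"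
  unfolding P_def c_interior_def by blast

lemma PplusK: assumes "p \<in> P" "k \<in> K" shows "p + k \<in> P"
proof -
  let ?U = "{z. z - k \<in> P}"
  have "c_open conv ?U" unfolding c_open_def
  proof (intro allI impI)
    fix xs x assume a: "conv xs x \<and> x \<in> ?U"
    have "conv (\<lambda>n. xs n + (-k)) (x + (-k))" using C1 a const by blast
    then have "\<forall>\<^sub>F n in sequentially. xs n + (-k) \<in> P"
      using Popen a unfolding c_open_def by auto
    then show "\<forall>\<^sub>F n in sequentially. xs n \<in> ?U" by simp
  qed
  moreover have "?U \<subseteq> K"
  proof
    fix z assume "z \<in> ?U"
    then have "le 0 (z - k)" using PK K_def by auto
    then have "le (0 + k) (z - k + k)" using VO unfolding vector_ordering_def by blast
    then have "le k z" by simp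
    moreover have "le 0 k" using assms K_def by auto
    ultimately show "z \<in> K" using VO unfolding vector_ordering_def K_def by blast
  qed
  ultimately have "?U \<subseteq> P" by (rule int_max[rotated])
  then show ?thesis using assms by auto
qed

lemma PP: "p \<in> P \<Longrightarrow> q \<in> P \<Longrightarrow> p + q \<in> P"
  using PplusK PK by blast

lemma Pscale: assumes "c > 0" "p \<in> P" shows "c *\<^sub>R p \<in> P"
proof -
  let ?U = "{z. (1/c) *\<^sub>R z \<in> P}"
  have "c_open conv ?U" unfolding c_open_def
  proof (intro allI impI)
    fix xs x assume a: "conv xs x \<and> x \<in> ?U"
    have "conv (\<lambda>n. (1/c) *\<^sub>R xs n) ((1/c) *\<^sub>R x)" using C2 a by blast
    then show "\<forall>\<^sub>F n in sequentially. xs n \<in> ?U"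
      using Popen a unfolding c_open_def by auto
  qed
  moreover have "?U \<subseteq> K"
  proof
    fix z assume "z \<in> ?U"
    then have "le 0 ((1/c) *\<^sub>R z)" using PK K_def by auto
    then have "le (c *\<^sub>R 0) (c *\<^sub>R ((1/c) *\<^sub>R z))"
      using VO assms unfolding vector_ordering_def by (meson less_imp_le)
    then show "z \<in> K" using assms K_def by simp
  qed
  ultimately have "?U \<subseteq> P" by (rule int_max[rotated])
  then show ?thesis using assms by auto
qed

lemma near: assumes "p \<in> P"
  shows "\<forall>\<^sub>F n in sequentially. p - inverse (real (Suc n)) *\<^sub>R e \<in> P"
proof -
  have L: "(\<lambda>n. - inverse (real (Suc n))) \<longlonglongrightarrow> - 0"
    by (intro tendsto_minus LIMSEQ_inverse_real_of_nat)
  have "conv (\<lambda>n. (- inverse (real (Suc n))) *\<^sub>R e) (0 *\<^sub>R e)"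
    using C3[OF L, of e] by simp
  then have "conv (\<lambda>n. p + (- inverse (real (Suc n))) *\<^sub>R e) (p + 0 *\<^sub>R e)"
    using C1 const by blast
  then show ?thesis using Popen assms unfolding c_open_def by auto
qed

lemma ev_ex: "\<forall>\<^sub>F n in sequentially. Q n \<Longrightarrow> \<exists>n. Q n"
  by (auto simp: eventually_sequentially)

lemma basis_int:
  assumes "x \<in> open_interval lt a b" "x \<in> open_interval lt c d" "e \<in> P"
  shows "\<exists>r>0. open_interval lt (x - r *\<^sub>R e) (x + r *\<^sub>R e) \<subseteq> open_interval lt a b \<inter> open_interval lt c d"
proof -
  have h: "x - a \<in> P" "b - x \<in> P" "x - c \<in> P" "d - x \<in> P"
    using assms(1,2) unfolding open_interval_def lt_iff by auto
  obtain n where n: "x - a - inverse (real (Suc n)) *\<^sub>R e \<in> P"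
      "b - x - inverse (real (Suc n)) *\<^sub>R e \<in> P"
      "x - c - inverse (real (Suc n)) *\<^sub>R e \<in> P"
      "d - x - inverse (real (Suc n)) *\<^sub>R e \<in> P"
    using ev_ex[OF eventually_conj[OF near[OF h(1)] eventually_conj[OF near[OF h(2)]
          eventually_conj[OF near[OF h(3)] near[OF h(4)]]]]] by blast
  define r where "r = inverse (real (Suc n))"
  have r: "r > 0" unfolding r_def by simp
  have "open_interval lt (x - r *\<^sub>R e) (x + r *\<^sub>R e) \<subseteq> open_interval lt a b \<inter> open_interval lt c d"
  proof
    fix z assume "z \<in> open_interval lt (x - r *\<^sub>R e) (x + r *\<^sub>R e)"
    then have z: "z - (x - r *\<^sub>R e) \<in> P" "x + r *\<^sub>R e - z \<in> P"
      unfolding open_interval_def lt_iff by auto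
    have "z - a = (z - (x - r *\<^sub>R e)) + (x - a - r *\<^sub>R e)" by (simp add: algebra_simps)
    moreover have "b - z = (x + r *\<^sub>R e - z) + (b - x - r *\<^sub>R e)" by (simp add: algebra_simps)
    moreover have "z - c = (z - (x - r *\<^sub>R e)) + (x - c - r *\<^sub>R e)" by (simp add: algebra_simps)
    moreover have "d - z = (x + r *\<^sub>R e - z) + (d - x - r *\<^sub>R e)" by (simp add: algebra_simps)
    note e = this
    have n': "x - a - r *\<^sub>R e \<in> P" "b - x - r *\<^sub>R e \<in> P" "x - c - r *\<^sub>R e \<in> P" "d - x - r *\<^sub>R e \<in> P"
      using n unfolding r_def by auto
    have "z - a \<in> P" "b - z \<in> P" "z - c \<in> P" "d - z \<in> P"
      using e PP[OF z(1) n'(1)] PP[OF z(2) n'(2)] PP[OF z(1) n'(3)] PP[OF z(2) n'(4)] by simp_all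
    then show "z \<in> open_interval lt a b \<inter> open_interval lt c d"
      unfolding open_interval_def lt_iff by blast
  qed
  then show ?thesis using r by blast
qed

lemma in_own: "e \<in> P \<Longrightarrow> r > 0 \<Longrightarrow> x \<in> open_interval lt (x - r *\<^sub>R e) (x + r *\<^sub>R e)"
  unfolding open_interval_def lt_iff using Pscale by simp

lemma lt_own: assumes "e \<in> P" "r > 0" shows "lt (x - r *\<^sub>R e) (x + r *\<^sub>R e)"
proof -
  have "r *\<^sub>R e \<in> P" using Pscale assms by blast
  then have "r *\<^sub>R e + r *\<^sub>R e \<in> P" using PP by blast
  moreover have "(x + r *\<^sub>R e) - (x - r *\<^sub>R e) = r *\<^sub>R e + r *\<^sub>R e" by simp
  ultimately show ?thesis unfolding lt_iff by simp
qed

lemma closedK: "conv xs x \<Longrightarrow> (\<And>n. xs n \<in> K) \<Longrightarrow> x \<in> K"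
  using cone unfolding c_cone_def c_closed_def by blast

lemma limK: assumes "e \<in> P" "\<And>n. w + (2 * inverse (real (Suc n))) *\<^sub>R e \<in> P"
  shows "w \<in> K"
proof -
  have L: "(\<lambda>n. 2 * inverse (real (Suc n))) \<longlonglongrightarrow> 2 * 0"
    by (intro tendsto_mult tendsto_const LIMSEQ_inverse_real_of_nat)
  have "conv (\<lambda>n. (2 * inverse (real (Suc n))) *\<^sub>R e) (0 *\<^sub>R e)" using C3[OF L, of e] by simp
  then have "conv (\<lambda>n. w + (2 * inverse (real (Suc n))) *\<^sub>R e) (w + 0 *\<^sub>R e)"
    using C1 const by blast
  then show ?thesis using closedK assms(2) PK by auto
qed

lemma haus: assumes "e \<in> P" "x \<noteq> y"
  shows "\<exists>r>0. open_interval lt (x - r *\<^sub>R e) (x + r *\<^sub>R e) \<inter> open_interval lt (y - r *\<^sub>R e) (y + r *\<^sub>R e) = {}"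
proof (rule ccontr)
  assume nt: "\<not> ?thesis"
  have ne: "\<And>n. \<exists>z. z \<in> open_interval lt (x - inverse (real (Suc n)) *\<^sub>R e) (x + inverse (real (Suc n)) *\<^sub>R e)
      \<and> z \<in> open_interval lt (y - inverse (real (Suc n)) *\<^sub>R e) (y + inverse (real (Suc n)) *\<^sub>R e)"
  proof -
    fix n
    have "inverse (real (Suc n)) > 0" by simp
    then have "open_interval lt (x - inverse (real (Suc n)) *\<^sub>R e) (x + inverse (real (Suc n)) *\<^sub>R e) \<inter> open_interval lt (y - inverse (real (Suc n)) *\<^sub>R e) (y + inverse (real (Suc n)) *\<^sub>R e) \<noteq> {}"
      using nt by blast
    then show "\<exists>z. z \<in> open_interval lt (x - inverse (real (Suc n)) *\<^sub>R e) (x + inverse (real (Suc n)) *\<^sub>R e)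
      \<and> z \<in> open_interval lt (y - inverse (real (Suc n)) *\<^sub>R e) (y + inverse (real (Suc n)) *\<^sub>R e)" by blast
  qed
  have A: "y - x + (2 * inverse (real (Suc n))) *\<^sub>R e \<in> P" for n
  proof -
    define r where "r = inverse (real (Suc n))"
    obtain z where z1: "z \<in> open_interval lt (x - r *\<^sub>R e) (x + r *\<^sub>R e)"
        and z2: "z \<in> open_interval lt (y - r *\<^sub>R e) (y + r *\<^sub>R e)"
      using ne[of n] unfolding r_def by blast
    have z: "z - (x - r *\<^sub>R e) \<in> P" "y + r *\<^sub>R e - z \<in> P"
      using z1 z2 unfolding open_interval_def lt_iff mem_Collect_eq by blast+
    have eq: "y - x + (2 * r) *\<^sub>R e = (z - (x - r *\<^sub>R e)) + (y + r *\<^sub>R e - z)"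
    proof -
      have t: "(2 * r) *\<^sub>R e = r *\<^sub>R e + r *\<^sub>R e" by (metis scaleR_2 scaleR_scaleR)
      show ?thesis unfolding t by (simp add: algebra_simps)
    qed
    show ?thesis unfolding r_def[symmetric] eq by (rule PP[OF z(1) z(2)])
  qed
  have B: "x - y + (2 * inverse (real (Suc n))) *\<^sub>R e \<in> P" for n
  proof -
    define r where "r = inverse (real (Suc n))"
    obtain z where z1: "z \<in> open_interval lt (x - r *\<^sub>R e) (x + r *\<^sub>R e)"
        and z2: "z \<in> open_interval lt (y - r *\<^sub>R e) (y + r *\<^sub>R e)"
      using ne[of n] unfolding r_def by blast
    have z: "z - (y - r *\<^sub>R e) \<in> P" "x + r *\<^sub>R e - z \<in> P"
      using z1 z2 unfolding open_interval_def lt_iff mem_Collect_eq by blast+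
    have eq: "x - y + (2 * r) *\<^sub>R e = (z - (y - r *\<^sub>R e)) + (x + r *\<^sub>R e - z)"
    proof -
      have t: "(2 * r) *\<^sub>R e = r *\<^sub>R e + r *\<^sub>R e" by (metis scaleR_2 scaleR_scaleR)
      show ?thesis unfolding t by (simp add: algebra_simps)
    qed
    show ?thesis unfolding r_def[symmetric] eq by (rule PP[OF z(1) z(2)])
  qed
  have "y - x \<in> K" "x - y \<in> K" using limK[OF assms(1)] A B by blast+
  then have "y - x \<in> K \<inter> uminus ` K" by (metis IntI image_eqI minus_diff_eq)
  then have "y - x = 0" using cone unfolding c_cone_def by blast
  then show False using assms by simp
qed

end

theorem theorem6p2:
  fixes conv :: "(nat \<Rightarrow> 'a::real_vector) \<Rightarrow> 'a \<Rightarrow> bool"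
    and le lt :: "'a \<Rightarrow> 'a \<Rightarrow> bool"
  assumes "solid_vector_space conv le lt"
  defines "\<B> \<equiv> {open_interval lt a b | a b. lt a b}"
  shows "\<exists>T. topspace T = UNIV \<and>
             (\<forall>U. openin T U \<longleftrightarrow> (\<exists>\<U>. \<U> \<subseteq> \<B> \<and> U = \<Union>\<U>)) \<and>
             Hausdorff_space T"
proof -
  interpret svs conv le lt using assms(1) by unfold_locales
  obtain e where e: "e \<in> P" using Pne by blast
  define Op where "Op U \<longleftrightarrow> (\<forall>x\<in>U. \<exists>I\<in>\<B>. x \<in> I \<and> I \<subseteq> U)" for U
  have OB: "Op U \<longleftrightarrow> (\<exists>\<U>. \<U> \<subseteq> \<B> \<and> U = \<Union>\<U>)" for U
  proof
    assume "Op U" then show "\<exists>\<U>. \<U> \<subseteq> \<B> \<and> U = \<Union>\<U>"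
      by (intro exI[of _ "{I\<in>\<B>. I \<subseteq> U}"]) (auto simp: Op_def)
  next
    assume "\<exists>\<U>. \<U> \<subseteq> \<B> \<and> U = \<Union>\<U>" then show "Op U" unfolding Op_def by blast
  qed
  have ball: "\<exists>I\<in>\<B>. x \<in> I \<and> I \<subseteq> open_interval lt (x - r *\<^sub>R e) (x + r *\<^sub>R e)" if "r > 0" for x r
  proof (rule bexI[of _ "open_interval lt (x - r *\<^sub>R e) (x + r *\<^sub>R e)"])
    show "open_interval lt (x - r *\<^sub>R e) (x + r *\<^sub>R e) \<in> \<B>"
      unfolding \<B>_def using lt_own[OF e that] by blast
  qed (use in_own[OF e that] in blast)
  have top: "istopology Op" unfolding istopology_def
  proof (intro conjI allI impI)
    fix S T assume S: "Op S" and T: "Op T"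
    show "Op (S \<inter> T)" unfolding Op_def
    proof
      fix x assume "x \<in> S \<inter> T"
      then obtain I1 I2 where "I1 \<in> \<B>" "I2 \<in> \<B>" "x \<in> I1" "x \<in> I2" "I1 \<subseteq> S" "I2 \<subseteq> T"
        using S T unfolding Op_def by blast
      then obtain a b c d where "I1 = open_interval lt a b" "I2 = open_interval lt c d"
        "x \<in> open_interval lt a b" "x \<in> open_interval lt c d"
        unfolding \<B>_def by blast
      then obtain r where r: "r > 0" and sub: "open_interval lt (x - r *\<^sub>R e) (x + r *\<^sub>R e) \<subseteq> I1 \<inter> I2"
        using basis_int e by metis
      obtain I where "I \<in> \<B>" "x \<in> I" "I \<subseteq> open_interval lt (x - r *\<^sub>R e) (x + r *\<^sub>R e)"
        using ball[OF r, of x] by blast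
      then show "\<exists>I\<in>\<B>. x \<in> I \<and> I \<subseteq> S \<inter> T"
        using sub \<open>I1 \<subseteq> S\<close> \<open>I2 \<subseteq> T\<close> by blast
    qed
  next
    fix \<K> assume H: "\<forall>Z\<in>\<K>. Op Z"
    show "Op (\<Union>\<K>)" unfolding Op_def
    proof
      fix x assume "x \<in> \<Union>\<K>"
      then obtain Z where "Z \<in> \<K>" "x \<in> Z" by blast
      then obtain I where "I \<in> \<B>" "x \<in> I" "I \<subseteq> Z" using H unfolding Op_def by blast
      then show "\<exists>I\<in>\<B>. x \<in> I \<and> I \<subseteq> \<Union>\<K>" using \<open>Z \<in> \<K>\<close> by blast
    qed
  qed
  define T where "T = topology Op"
  have oT: "openin T = Op" using top T_def by simp
  have OU: "Op UNIV" unfolding Op_def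
  proof
    fix x :: 'a
    obtain I where "I \<in> \<B>" "x \<in> I" using ball[of 1 x] by auto
    then show "\<exists>I\<in>\<B>. x \<in> I \<and> I \<subseteq> UNIV" by blast
  qed
  have tsp: "topspace T = UNIV" unfolding topspace_def oT using OU by blast
  have "Hausdorff_space T" unfolding Hausdorff_space_def
  proof (intro allI impI)
    fix x y assume "x \<in> topspace T \<and> y \<in> topspace T \<and> x \<noteq> y"
    then obtain r where r: "r > 0" and d: "open_interval lt (x - r *\<^sub>R e) (x + r *\<^sub>R e) \<inter> open_interval lt (y - r *\<^sub>R e) (y + r *\<^sub>R e) = {}"
      using haus[OF e] by blast
    have "\<And>z. Op (open_interval lt (z - r *\<^sub>R e) (z + r *\<^sub>R e))"
      unfolding Op_def \<B>_def using lt_own[OF e r] by blast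
    then show "\<exists>U V. openin T U \<and> openin T V \<and> x \<in> U \<and> y \<in> V \<and> disjnt U V"
    proof -
      let ?U = "open_interval lt (x - r *\<^sub>R e) (x + r *\<^sub>R e)"
      let ?V = "open_interval lt (y - r *\<^sub>R e) (y + r *\<^sub>R e)"
      have "openin T ?U" "openin T ?V" using oT \<open>\<And>z. Op (open_interval lt (z - r *\<^sub>R e) (z + r *\<^sub>R e))\<close> by auto
      moreover have "x \<in> ?U" "y \<in> ?V" using in_own[OF e r] by auto
      moreover have "disjnt ?U ?V" using d unfolding disjnt_def .
      ultimately show ?thesis by blast
    qed
  qed
  moreover have "\<forall>U. openin T U \<longleftrightarrow> (\<exists>\<U>. \<U> \<subseteq> \<B> \<and> U = \<Union>\<U>)"
    using OB oT by simp
  ultimately show ?thesis using tsp by blast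
qed

end
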